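(* Let $\tau_i$ be an HC task that switches to HC mode at time $t_i\le t$, and suppose $t-t_i\ge D_i$. Then $\tau_i$ generates maximal demand during $[0,t)$ when its first job is released at time $t-D_i-\lfloor (t-D_i)/T_i\rfloor\cdot T_i$ and all successive jobs are released as soon as possible (every $T_i$ time units thereafter).
   Context: A mixed-criticality sporadic task is $\tau_i=(T_i,L_i,\{C_i^L,C_i^H\},D_i)$: jobs are released with minimum separation $T_i$, $L_i\in\{LC,HC\}$, $D_i\le T_i$ is the relative deadline, and $C_i^L<C_i^H$ for HC tasks. Each task has a tightened deadline $D_i^L\le D_i$. An HC task is in LC mode until the instant $t_i$ at which some job requests to execute for more than $C_i^L$; from then on it is in HC mode. While in LC mode, a job released at $r$ must receive $C_i^L$ time units by $r+D_i^L$; once the task is in HC mode, a job may require up to $C_i^H$ units in total, to be received by its actual deadline $r+D_i$. The demand of a task during $[0,t)$ is the amount of execution that must be completed within $[0,t)$ in order to meet all of its deadlines that fall in $[0,t)$; execution with deadline after $t$ contributes no demand. "Maximal demand" is over all legal release sequences (minimum separation $T_i$) and all legal execution behaviours. *)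

theory Defs
  imports Complex_Main
begin

text \<open>Model of a single HC task with period T, tightened (LC) deadline DL, deadline D,
 budgets CL < CH, and mode-switch instant s (= t_i).  A release pattern is a set R of
 release times (possibly infinite); an execution behaviour assigns to each job
 (identified by its release time) its requested execution amount.\<close>

definition legal_releases :: "real \<Rightarrow> real set \<Rightarrow> bool" where
  "legal_releases T R \<longleftrightarrow>
     (\<forall>r\<in>R. 0 \<le> r) \<and> (\<forall>a\<in>R. \<forall>b\<in>R. a \<noteq> b \<longrightarrow> T \<le> \<bar>a - b\<bar>)"

text \<open>A job released at r whose LC deadline r + DL lies strictly before the switch
 is served completely in LC mode (budget CL, deadline r + DL); every other job is
 in HC mode from s on (budget CH, deadline r + D).\<close>

definition job_budget :: "real \<Rightarrow> real \<Rightarrow> real \<Rightarrow> real \<Rightarrow> real \<Rightarrow> real" where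
  "job_budget DL CL CH s r = (if r + DL < s then CL else CH)"

definition job_deadline :: "real \<Rightarrow> real \<Rightarrow> real \<Rightarrow> real \<Rightarrow> real" where
  "job_deadline DL D s r = (if r + DL < s then r + DL else r + D)"

definition legal_exec :: "real \<Rightarrow> real \<Rightarrow> real \<Rightarrow> real \<Rightarrow> real set \<Rightarrow> (real \<Rightarrow> real) \<Rightarrow> bool" where
  "legal_exec DL CL CH s R e \<longleftrightarrow> (\<forall>r\<in>R. 0 \<le> e r \<and> e r \<le> job_budget DL CL CH s r)"

text \<open>Demand during [0,t): execution of jobs whose (effective) deadline is at most t.
 Only jobs released no later than t can have such deadlines.\<close>

definition demand :: "real \<Rightarrow> real \<Rightarrow> real \<Rightarrow> real \<Rightarrow> real set \<Rightarrow> (real \<Rightarrow> real) \<Rightarrow> real" where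
  "demand DL D s t R e =
     (\<Sum>r\<in>{r\<in>R. r \<le> t}. if job_deadline DL D s r \<le> t then e r else 0)"

definition aligned_releases :: "real \<Rightarrow> real \<Rightarrow> real \<Rightarrow> real set" where
  "aligned_releases T D t =
     {t - D - of_int \<lfloor>(t - D) / T\<rfloor> * T + real k * T | k. True}"

end

theory Submission
  imports Defs
begin

lemma sep_finite:
  fixes T t :: real
  assumes "0 < T" "legal_releases T R"
  shows "finite {r\<in>R. r \<le> t}"
proof -
  let ?C = "{r\<in>R. r \<le> t}"
  let ?g = "\<lambda>r. \<lfloor>r / T\<rfloor>"
  have inj: "inj_on ?g ?C"
  proof (rule inj_onI)
    fix a b assume a: "a \<in> ?C" and b: "b \<in> ?C" and eq: "?g a = ?g b"
    have "\<bar>a / T - b / T\<bar> < 1" using eq by linarith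
    hence "\<bar>a - b\<bar> < T" using assms(1)
      by (simp add: diff_divide_distrib[symmetric] abs_divide divide_less_eq)
    thus "a = b" using a b assms(2) unfolding legal_releases_def by force
  qed
  have "?g ` ?C \<subseteq> {0..\<lfloor>t / T\<rfloor>}"
  proof
    fix x assume "x \<in> ?g ` ?C"
    then obtain r where r: "r \<in> R" "r \<le> t" "x = ?g r" by auto
    have "0 \<le> r" using r assms(2) unfolding legal_releases_def by auto
    hence "0 \<le> r / T" "r / T \<le> t / T" using r assms(1) by (auto simp: divide_right_mono)
    thus "x \<in> {0..\<lfloor>t / T\<rfloor>}" using r by (auto intro: floor_mono)
  qed
  hence "finite (?g ` ?C)" by (rule finite_subset) simp
  thus ?thesis using inj finite_image_iff by blast
qed

lemma budget_mono:
  assumes "CL < CH" "p \<le> q"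
  shows "job_budget DL CL CH s p \<le> job_budget DL CL CH s q"
  using assms unfolding job_budget_def by auto

theorem lemma3:
  fixes T D DL CL CH s t :: real
  assumes "0 < T" and "0 < DL" and "DL \<le> D" and "D \<le> T"
    and "0 < CL" and "CL < CH"
    and "0 \<le> s" and "s \<le> t" and "t - s \<ge> D"
  shows "legal_releases T (aligned_releases T D t)
       \<and> legal_exec DL CL CH s (aligned_releases T D t) (job_budget DL CL CH s)
       \<and> (\<forall>R e. legal_releases T R \<longrightarrow> legal_exec DL CL CH s R e \<longrightarrow>
             demand DL D s t R e
               \<le> demand DL D s t (aligned_releases T D t) (job_budget DL CL CH s))"
proof -
  define A where "A = aligned_releases T D t"
  define N where "N = \<lfloor>(t - D) / T\<rfloor>"
  define a0 where "a0 = t - D - of_int N * T"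
  have A_eq: "A = {a0 + real k * T | k. True}"
    unfolding A_def aligned_releases_def a0_def N_def by simp
  have N0: "0 \<le> N" unfolding N_def using assms by auto
  have "of_int N \<le> (t - D) / T" unfolding N_def by linarith
  hence a0nn: "0 \<le> a0" unfolding a0_def using assms(1) by (simp add: le_divide_eq)
  have bpos: "\<And>r. 0 < job_budget DL CL CH s r" unfolding job_budget_def using assms by auto
  have legA: "legal_releases T A"
    unfolding legal_releases_def
  proof (intro conjI ballI impI)
    fix r assume "r \<in> A" thus "0 \<le> r" using A_eq a0nn assms(1) by auto
  next
    fix a b assume "a \<in> A" "b \<in> A" "a \<noteq> b"
    then obtain k l :: nat where kl: "a = a0 + real k * T" "b = a0 + real l * T" "k \<noteq> l"
      using A_eq by auto
    have "a - b = (real k - real l) * T" using kl by (simp add: algebra_simps)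
    hence "\<bar>a - b\<bar> = \<bar>real k - real l\<bar> * T" using assms(1) by (simp add: abs_mult)
    moreover have "1 \<le> \<bar>real k - real l\<bar>" using kl(3) by linarith
    ultimately show "T \<le> \<bar>a - b\<bar>" using assms(1) by (metis mult_right_mono mult_1 less_le)
  qed
  have exA: "legal_exec DL CL CH s A (job_budget DL CL CH s)"
    unfolding legal_exec_def using bpos less_imp_le by auto
  have main: "demand DL D s t R e \<le> demand DL D s t A (job_budget DL CL CH s)"
    if legR: "legal_releases T R" and exR: "legal_exec DL CL CH s R e" for R e
  proof -
    define C where "C = {r\<in>R. r \<le> t \<and> job_deadline DL D s r \<le> t}"
    define f where "f = (\<lambda>p. t - D - real (nat \<lfloor>(t - D - p) / T\<rfloor>) * T)"
    let ?b = "job_budget DL CL CH s"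
    let ?h = "\<lambda>r. if job_deadline DL D s r \<le> t then ?b r else 0"
    have finR: "finite {r\<in>R. r \<le> t}" using sep_finite[OF assms(1) legR] .
    have finA: "finite {r\<in>A. r \<le> t}" using sep_finite[OF assms(1) legA] .
    have finC: "finite C" using finR unfolding C_def by (rule finite_subset[rotated]) auto
    have Cprop: "0 \<le> p \<and> p \<le> t - D" if "p \<in> C" for p
    proof -
      have "0 \<le> p" using that legR unfolding C_def legal_releases_def by auto
      moreover have "p \<le> t - D"
      proof (cases "p + DL < s")
        case True thus ?thesis using assms by linarith
      next
        case False thus ?thesis using that unfolding C_def job_deadline_def by auto
      qed
      ultimately show ?thesis by simp
    qed
    have fprop: "p \<le> f p \<and> f p < p + T \<and> f p \<in> A \<and> f p \<le> t - D" if "p \<in> C" for p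
    proof -
      define j where "j = \<lfloor>(t - D - p) / T\<rfloor>"
      have p: "0 \<le> p" "p \<le> t - D" using Cprop[OF that] by auto
      have j0: "0 \<le> j" unfolding j_def using p assms(1) by auto
      have fj: "f p = t - D - of_int j * T" unfolding f_def j_def[symmetric] using j0 by simp
      have j1: "of_int j \<le> (t - D - p) / T" "(t - D - p) / T < of_int j + 1"
        unfolding j_def by linarith+
      have "of_int j * T \<le> t - D - p" using j1(1) assms(1) by (simp add: le_divide_eq)
      moreover have "t - D - p < (of_int j + 1) * T" using j1(2) assms(1) by (simp add: divide_less_eq)
      ultimately have r1: "p \<le> f p" "f p < p + T" unfolding fj by (auto simp: algebra_simps)
      have "j \<le> N" unfolding j_def N_def using p assms(1) by (auto intro!: floor_mono divide_right_mono)
      hence "f p = a0 + real (nat (N - j)) * T" unfolding fj a0_def using j0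
        by (simp add: algebra_simps)
      hence "f p \<in> A" unfolding A_eq by blast
      moreover have "f p \<le> t - D" unfolding fj using j0 assms(1) by simp
      ultimately show ?thesis using r1 by simp
    qed
    have injf: "inj_on f C"
    proof (rule inj_onI)
      fix a b assume a: "a \<in> C" and b: "b \<in> C" and eq: "f a = f b"
      have "\<bar>a - b\<bar> < T" using fprop[OF a] fprop[OF b] eq by auto
      thus "a = b" using a b legR unfolding C_def legal_releases_def by force
    qed
    have "demand DL D s t R e = (\<Sum>r\<in>C. e r)"
      unfolding demand_def C_def using finR by (simp add: sum.inter_filter[symmetric] conj_assoc)
    also have "\<dots> \<le> (\<Sum>r\<in>C. ?b r)"
      using exR unfolding legal_exec_def C_def by (intro sum_mono) auto
    also have "\<dots> \<le> (\<Sum>r\<in>C. ?b (f r))"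
      using fprop assms(6) by (intro sum_mono budget_mono) auto
    also have "\<dots> = (\<Sum>q\<in>f ` C. ?b q)" using sum.reindex[OF injf, of ?b] by (simp add: comp_def)
    also have "\<dots> = (\<Sum>q\<in>f ` C. ?h q)"
    proof (rule sum.cong[OF refl])
      fix q assume "q \<in> f ` C"
      hence "q \<le> t - D" using fprop by auto
      hence "job_deadline DL D s q \<le> t" unfolding job_deadline_def using assms by auto
      thus "?b q = ?h q" by simp
    qed
    also have "\<dots> \<le> (\<Sum>q\<in>{r\<in>A. r \<le> t}. ?h q)"
    proof (rule sum_mono2[OF finA])
      show "f ` C \<subseteq> {r \<in> A. r \<le> t}" using fprop assms by fastforce
      show "\<And>b. b \<in> {r \<in> A. r \<le> t} - f ` C \<Longrightarrow> 0 \<le> ?h b" using bpos less_imp_le by auto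
    qed
    also have "\<dots> = demand DL D s t A ?b" unfolding demand_def by simp
    finally show ?thesis .
  qed
  show ?thesis using legA exA main unfolding A_def by blast
qed

end
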